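(* Let $X$ be a proper geodesic metric space with a convergence compactification $(\partial X,[\cdot])$. Given $r\ge C>0$, there exist $\hat r=\hat r(r,C)$ and $L_0=L_0(r,C)$ with the following property. Given $L\ge L_0$ and $\theta\in(0,1]$, let $\gamma$ be a geodesic ray starting at a point $o\in X$ that is $(r,C,L)$-contracting at $\theta$-frequency, and assume its terminal class $[\gamma^+]$ consists of non-pinched points. Then every geodesic ray from $o$ ending at $[\gamma^+]$ is $(\hat r,C,L)$-contracting at $\theta$-frequency.
   Context: $\pi_A$ is nearest-point projection; a closed $U$ is $C$-contracting if every geodesic $\gamma$ with $d(\gamma,U)\ge C$ has $\mathrm{diam}(\pi_U(\gamma))\le C$. Convergence compactification: $\overline X=X\cup\partial X$ metrizable, $X$ open dense, isometries extend to homeomorphisms, $\partial X$ has an $\mathrm{Isom}(X)$-invariant partition $[\cdot]$. A sequence accumulates into $[\xi]$ if all its accumulation points lie in $[\xi]$; a ray ends at $[\xi]$ if every unbounded sequence of its points accumulates into $[\xi]$. Sets $A_n$ are escaping if $d(o,A_n)\to\infty$; $\Omega_o(A)=\{x:\mathrm{diam}([o,x]\cap A)\ge 10C\}$. Axioms: (A) each contracting geodesic ray accumulates into a closed class and sequences with escaping projections to it accumulate into that class; (B) for an escaping sequence of $C$-contracting quasi-geodesics $\gamma_n$, some subsequence $A_n$ of $\gamma_n\cup\Omega_o(\gamma_n)$ and some class $[\xi]$ satisfy: every convergent sequence $x_n\in A_n$ tends into $[\xi]$; (C) non-pinched points exist, where $\xi$ is non-pinched if whenever $x_n,y_n\in X$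 converge to $[\xi]$ the geodesic segments $[x_n,y_n]$ are escaping. A geodesic segment $\gamma$ is $(r,C,L)$-contracting at $\theta$-frequency if for every $0<t<(1-\theta)\ell(\gamma)$ there are an interval $[s-L/2,s+L/2]\subseteq[t,t+\theta\ell(\gamma)]$ and a $C$-contracting geodesic $p$ with $d(\gamma(u),p)\le r$ on that interval; a geodesic ray is so if there is $R_0$ such that every initial segment $\gamma[0,t]$, $t\ge R_0$, is. Such a ray (for $L$ large) accumulates into a single class $[\gamma^+]$. *)

theory Defs
  imports "HOL-Analysis.Analysis"
begin

text \<open>Extended-real diameter (Sup of distances); avoids the library convention
  that the diameter of an unbounded set is 0.\<close>
definition ediam :: "'a::metric_space set \<Rightarrow> ereal" where
  "ediam S = (SUP x\<in>S. SUP y\<in>S. ereal (dist x y))"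

definition sdist :: "'a::metric_space set \<Rightarrow> 'a set \<Rightarrow> real" where
  "sdist A B = (INF a\<in>A. infdist a B)"

definition proj :: "'a::metric_space set \<Rightarrow> 'a \<Rightarrow> 'a set" where
  "proj U x = {u\<in>U. dist x u = infdist x U}"

definition projset :: "'a::metric_space set \<Rightarrow> 'a set \<Rightarrow> 'a set" where
  "projset U A = (\<Union>x\<in>A. proj U x)"

definition geod_seg :: "(real \<Rightarrow> 'a::metric_space) \<Rightarrow> real \<Rightarrow> 'a \<Rightarrow> 'a \<Rightarrow> bool" where
  "geod_seg g l x y \<longleftrightarrow> 0 \<le> l \<and> g 0 = x \<and> g l = y \<and>
     (\<forall>s\<in>{0..l}. \<forall>t\<in>{0..l}. dist (g s) (g t) = \<bar>s - t\<bar>)"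

definition geod_ray :: "(real \<Rightarrow> 'a::metric_space) \<Rightarrow> 'a \<Rightarrow> bool" where
  "geod_ray g x0 \<longleftrightarrow> g 0 = x0 \<and> (\<forall>s\<ge>0. \<forall>t\<ge>0. dist (g s) (g t) = \<bar>s - t\<bar>)"

definition quasi_geod :: "real \<Rightarrow> real \<Rightarrow> (real \<Rightarrow> 'a::metric_space) \<Rightarrow> real set \<Rightarrow> bool" where
  "quasi_geod lam c q I \<longleftrightarrow> is_interval I \<and> I \<noteq> {} \<and>
     (\<forall>s\<in>I. \<forall>t\<in>I. \<bar>s - t\<bar> / lam - c \<le> dist (q s) (q t) \<and> dist (q s) (q t) \<le> lam * \<bar>s - t\<bar> + c)"

definition contracting :: "real \<Rightarrow> 'a::metric_space set \<Rightarrow> bool" where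
  "contracting C U \<longleftrightarrow> closed U \<and>
     (\<forall>g l x y. geod_seg g l x y \<longrightarrow> sdist (g ` {0..l}) U \<ge> C \<longrightarrow>
        ediam (projset U (g ` {0..l})) \<le> ereal C)"

definition escaping :: "(nat \<Rightarrow> 'a::metric_space set) \<Rightarrow> bool" where
  "escaping A \<longleftrightarrow> (\<forall>x0. filterlim (\<lambda>n. infdist x0 (A n)) at_top sequentially)"

definition Omega :: "'a::metric_space \<Rightarrow> real \<Rightarrow> 'a set \<Rightarrow> 'a set" where
  "Omega x0 C A = {x. \<exists>g l. geod_seg g l x0 x \<and> ediam (g ` {0..l} \<inter> A) \<ge> ereal (10 * C)}"

definition freq_seg :: "real \<Rightarrow> real \<Rightarrow> real \<Rightarrow> real \<Rightarrow> (real \<Rightarrow> 'a::metric_space) \<Rightarrow> real \<Rightarrow> bool" where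
  "freq_seg r C L \<theta> g l \<longleftrightarrow>
     (\<forall>t. 0 < t \<and> t < (1 - \<theta>) * l \<longrightarrow>
        (\<exists>s. {s - L/2 .. s + L/2} \<subseteq> {t .. t + \<theta> * l} \<and>
           (\<exists>p lp a b. geod_seg p lp a b \<and> contracting C (p ` {0..lp}) \<and>
              (\<forall>u\<in>{s - L/2 .. s + L/2}. infdist (g u) (p ` {0..lp}) \<le> r))))"

definition freq_ray :: "real \<Rightarrow> real \<Rightarrow> real \<Rightarrow> real \<Rightarrow> (real \<Rightarrow> 'a::metric_space) \<Rightarrow> bool" where
  "freq_ray r C L \<theta> g \<longleftrightarrow> (\<exists>R0. \<forall>t\<ge>R0. freq_seg r C L \<theta> g t)"

definition isometry_of :: "('a::metric_space \<Rightarrow> 'a) \<Rightarrow> bool" where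
  "isometry_of f \<longleftrightarrow> surj f \<and> (\<forall>x y. dist (f x) (f y) = dist x y)"

section \<open>Compactification: X embedded in Xbar via e, partition of boundary given by rel\<close>

definition bdry :: "('a \<Rightarrow> 'm) \<Rightarrow> 'm set" where
  "bdry e = - range e"

definition cls :: "('a \<Rightarrow> 'm) \<Rightarrow> ('m \<Rightarrow> 'm \<Rightarrow> bool) \<Rightarrow> 'm \<Rightarrow> 'm set" where
  "cls e rel \<xi> = {\<eta>\<in>bdry e. rel \<xi> \<eta>}"

definition accum_into :: "('a \<Rightarrow> 'm::metric_space) \<Rightarrow> (nat \<Rightarrow> 'a) \<Rightarrow> 'm set \<Rightarrow> bool" where
  "accum_into e x S \<longleftrightarrow> (\<forall>p. (\<exists>\<phi>. strict_mono \<phi> \<and> ((\<lambda>n. e (x (\<phi> n))) \<longlonglongrightarrow> p)) \<longrightarrow> p \<in> S)"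

definition ends_at :: "('a::metric_space \<Rightarrow> 'm::metric_space) \<Rightarrow> ('m \<Rightarrow> 'm \<Rightarrow> bool) \<Rightarrow> (real \<Rightarrow> 'a) \<Rightarrow> 'm \<Rightarrow> bool" where
  "ends_at e rel g \<xi> \<longleftrightarrow> (\<forall>t::nat \<Rightarrow> real. (\<forall>n. 0 \<le> t n) \<and> filterlim t at_top sequentially \<longrightarrow>
       accum_into e (\<lambda>n. g (t n)) (cls e rel \<xi>))"

definition nonpinched :: "('a::metric_space \<Rightarrow> 'm::metric_space) \<Rightarrow> ('m \<Rightarrow> 'm \<Rightarrow> bool) \<Rightarrow> 'm \<Rightarrow> bool" where
  "nonpinched e rel \<xi> \<longleftrightarrow>
     (\<forall>x y. accum_into e x (cls e rel \<xi>) \<and> accum_into e y (cls e rel \<xi>) \<longrightarrow>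
        (\<forall>g l. (\<forall>n. geod_seg (g n) (l n) (x n) (y n)) \<longrightarrow> escaping (\<lambda>n. g n ` {0..l n})))"

definition conv_compact :: "('a::metric_space \<Rightarrow> 'm::metric_space) \<Rightarrow> ('m \<Rightarrow> 'm \<Rightarrow> bool) \<Rightarrow> bool" where
  "conv_compact e rel \<longleftrightarrow>
     compact (UNIV :: 'm set) \<and>
     (\<exists>e'. homeomorphism UNIV (range e) e e') \<and> open (range e) \<and> closure (range e) = UNIV \<and>
     \<comment> \<open>partition of the boundary into classes\<close>
     (\<forall>\<xi>\<in>bdry e. rel \<xi> \<xi>) \<and>
     (\<forall>\<xi>\<in>bdry e. \<forall>\<eta>\<in>bdry e. rel \<xi> \<eta> \<longrightarrow> rel \<eta> \<xi>) \<and>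
     (\<forall>\<xi>\<in>bdry e. \<forall>\<eta>\<in>bdry e. \<forall>\<zeta>\<in>bdry e. rel \<xi> \<eta> \<longrightarrow> rel \<eta> \<zeta> \<longrightarrow> rel \<xi> \<zeta>) \<and>
     \<comment> \<open>isometries extend to homeomorphisms preserving the partition\<close>
     (\<forall>f. isometry_of f \<longrightarrow> (\<exists>h h'. homeomorphism UNIV UNIV h h' \<and> (\<forall>x. h (e x) = e (f x)) \<and>
        (\<forall>\<xi>\<in>bdry e. \<forall>\<eta>\<in>bdry e. rel \<xi> \<eta> \<longleftrightarrow> rel (h \<xi>) (h \<eta>)))) \<and>
     \<comment> \<open>Axiom (A)\<close>
     (\<forall>g x0 C. geod_ray g x0 \<and> contracting C (g ` {0..}) \<longrightarrow>
        (\<exists>\<xi>\<in>bdry e. closed (cls e rel \<xi>) \<and> ends_at e rel g \<xi> \<and>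
           (\<forall>y. escaping (\<lambda>n. proj (g ` {0..}) (y n)) \<longrightarrow> accum_into e y (cls e rel \<xi>)))) \<and>
     \<comment> \<open>Axiom (B)\<close>
     (\<forall>C lam c q I. lam \<ge> 1 \<and> c \<ge> 0 \<and>
        (\<forall>n. quasi_geod lam c (q n) (I n) \<and> contracting C (q n ` I n)) \<and>
        escaping (\<lambda>n. q n ` I n) \<longrightarrow>
        (\<forall>x0. \<exists>\<phi> \<xi>. strict_mono \<phi> \<and> \<xi> \<in> bdry e \<and>
           (\<forall>x. (\<forall>n. x n \<in> q (\<phi> n) ` I (\<phi> n) \<union> Omega x0 C (q (\<phi> n) ` I (\<phi> n))) \<longrightarrow>
              (\<forall>p. (\<lambda>n. e (x n)) \<longlonglongrightarrow> p \<longrightarrow> p \<in> cls e rel \<xi>)))) \<and>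
     \<comment> \<open>Axiom (C)\<close>
     (\<exists>\<xi>\<in>bdry e. nonpinched e rel \<xi>)"

end

theory Submission
  imports Defs
begin

lemma proj_ex:
  assumes "compact P" "P \<noteq> {}"
  shows "\<exists>c. c \<in> proj P x"
proof -
  have "continuous_on P (dist x)"
    by (intro continuous_intros)
  then obtain c where c: "c \<in> P" "\<forall>y\<in>P. dist x c \<le> dist x y"
    using continuous_attains_inf[OF assms] by blast
  have "infdist x P = dist x c"
  proof (rule antisym)
    show "infdist x P \<le> dist x c" using c(1) by (rule infdist_le)
    show "dist x c \<le> infdist x P"
      unfolding infdist_notempty[OF assms(2)] using c assms(2) by (auto intro: cINF_greatest)
  qed
  then show ?thesis using c(1) unfolding proj_def by auto
qed

lemma proj_dist: "c \<in> proj P x \<Longrightarrow> dist x c = infdist x P"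
  unfolding proj_def by auto

lemma seg_compact:
  assumes "geod_seg p lp a b"
  shows "compact (p ` {0..lp})" "p ` {0..lp} \<noteq> {}"
proof -
  have iso: "\<forall>s\<in>{0..lp}. \<forall>t\<in>{0..lp}. dist (p s) (p t) = \<bar>s - t\<bar>" and "0 \<le> lp"
    using assms unfolding geod_seg_def by auto
  have "continuous_on {0..lp} p"
    unfolding continuous_on_iff
  proof (intro ballI allI impI)
    fix x e assume x: "x \<in> {0..lp}" and e: "(0::real) < e"
    show "\<exists>d>0. \<forall>x'\<in>{0..lp}. dist x' x < d \<longrightarrow> dist (p x') (p x) < e"
      using iso x e by (intro exI[of _ e]) (auto simp: dist_real_def)
  qed
  then show "compact (p ` {0..lp})" by (intro compact_continuous_image) auto
  show "p ` {0..lp} \<noteq> {}" using \<open>0 \<le> lp\<close> by auto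
qed

lemma no_entry:
  fixes g :: "real \<Rightarrow> 'a::metric_space"
  assumes ctr: "contracting C P"
    and iso: "\<forall>s\<in>{a..b}. \<forall>t\<in>{a..b}. dist (g s) (g t) = \<bar>s - t\<bar>"
    and ab: "a \<le> b"
    and far: "\<forall>t\<in>{a..b}. C \<le> infdist (g t) P"
    and c1: "c1 \<in> proj P (g a)" and c2: "c2 \<in> proj P (g b)"
  shows "dist c1 c2 \<le> C"
proof -
  let ?h = "\<lambda>t. g (a + t)"
  have gs: "geod_seg ?h (b - a) (g a) (g b)"
    unfolding geod_seg_def
  proof (intro conjI ballI)
    fix s t assume "s \<in> {0..b-a}" "t \<in> {0..b-a}"
    then have "a + s \<in> {a..b}" "a + t \<in> {a..b}" by auto
    then show "dist (g (a + s)) (g (a + t)) = \<bar>s - t\<bar>" using iso by auto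
  qed (use ab in auto)
  have img: "?h ` {0..b-a} = g ` {a..b}"
  proof
    show "?h ` {0..b-a} \<subseteq> g ` {a..b}" by auto
    show "g ` {a..b} \<subseteq> ?h ` {0..b-a}"
    proof
      fix y assume "y \<in> g ` {a..b}"
      then obtain x where x: "x \<in> {a..b}" "y = g x" by auto
      then have "y = ?h (x - a)" "x - a \<in> {0..b-a}" by auto
      then show "y \<in> ?h ` {0..b-a}" by blast
    qed
  qed
  have ne: "g ` {a..b} \<noteq> {}" using ab by auto
  have sd: "C \<le> sdist (g ` {a..b}) P"
    unfolding sdist_def using far ne by (auto intro!: cINF_greatest)
  have "ediam (projset P (g ` {a..b})) \<le> ereal C"
    using ctr gs sd img unfolding contracting_def by metis
  moreover have "c1 \<in> projset P (g ` {a..b})" "c2 \<in> projset P (g ` {a..b})"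
    using c1 c2 ab unfolding projset_def by auto
  ultimately have "ereal (dist c1 c2) \<le> ereal C"
    unfolding ediam_def by (meson SUP_upper order_trans)
  then show ?thesis by simp
qed

lemma last_exit:
  fixes g :: "real \<Rightarrow> 'a::metric_space"
  assumes ctr: "contracting C P" and cP: "compact P" "P \<noteq> {}"
    and iso: "\<forall>s\<in>{a..b}. \<forall>t\<in>{a..b}. dist (g s) (g t) = \<bar>s - t\<bar>"
    and ab: "a \<le> b" and rho: "C \<le> \<rho>" and C0: "0 \<le> C" and start: "infdist (g a) P \<le> \<rho>"
  shows "\<exists>w\<in>{a..b}. infdist (g w) P \<le> \<rho> + 2 \<and> (\<forall>c\<in>proj P (g b). dist (g w) c \<le> \<rho> + 2 + C)"
proof -
  define S where "S = {t\<in>{a..b}. infdist (g t) P \<le> \<rho>}"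
  have aS: "a \<in> S" using ab start unfolding S_def by auto
  have bdd: "bdd_above S" unfolding S_def by (auto intro: bdd_aboveI[of _ b])
  define w where "w = Sup S"
  have wb: "w \<le> b" unfolding w_def using aS by (intro cSup_least) (auto simp: S_def)
  have "w - 1 < w" by simp
  then obtain t1 where t1: "t1 \<in> S" "w - 1 < t1"
    using less_cSup_iff[of S "w - 1"] aS bdd unfolding w_def by blast
  have t1w: "t1 \<le> w" unfolding w_def using t1(1) bdd by (rule cSup_upper)
  define w3 where "w3 = min (w + 1) b"
  have t1ab: "t1 \<in> {a..b}" using t1 unfolding S_def by auto
  have w3ab: "w3 \<in> {a..b}" using t1ab t1w wb unfolding w3_def by auto
  have "infdist (g w3) P \<le> infdist (g t1) P + dist (g w3) (g t1)" by (rule infdist_triangle)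
  also have "dist (g w3) (g t1) = \<bar>w3 - t1\<bar>" using iso w3ab t1ab by auto
  also have "\<bar>w3 - t1\<bar> \<le> 2" using t1 t1w t1ab unfolding w3_def by auto
  finally have i3: "infdist (g w3) P \<le> \<rho> + 2" using t1(1) unfolding S_def by auto
  have "\<forall>c\<in>proj P (g b). dist (g w3) c \<le> \<rho> + 2 + C"
  proof
    fix c assume c: "c \<in> proj P (g b)"
    show "dist (g w3) c \<le> \<rho> + 2 + C"
    proof (cases "w3 = b")
      case True
      then show ?thesis using proj_dist[OF c] i3 C0 by simp
    next
      case False
      then have w3: "w3 = w + 1" "w3 < b" using w3ab unfolding w3_def by auto
      have far: "\<forall>t\<in>{w3..b}. C \<le> infdist (g t) P"
      proof
        fix t assume t: "t \<in> {w3..b}"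
        have "t \<notin> S"
        proof
          assume "t \<in> S"
          then have "t \<le> w" unfolding w_def using bdd by (rule cSup_upper)
          then show False using t w3 by auto
        qed
        then show "C \<le> infdist (g t) P" using t w3ab rho unfolding S_def by auto
      qed
      obtain c' where c': "c' \<in> proj P (g w3)" using proj_ex[OF cP] by blast
      have iso2: "\<forall>s\<in>{w3..b}. \<forall>t\<in>{w3..b}. dist (g s) (g t) = \<bar>s - t\<bar>"
        using iso w3ab by auto
      have "dist c' c \<le> C" using no_entry[OF ctr iso2 _ far c' c] w3 by auto
      moreover have "dist (g w3) c' \<le> \<rho> + 2" using proj_dist[OF c'] i3 by simp
      ultimately show ?thesis using dist_triangle[of "g w3" c c'] by linarith
    qed
  qed
  then show ?thesis using i3 w3ab by blast
qed

lemma first_entry: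
  fixes g :: "real \<Rightarrow> 'a::metric_space"
  assumes ctr: "contracting C P" and cP: "compact P" "P \<noteq> {}"
    and iso: "\<forall>s\<in>{a..b}. \<forall>t\<in>{a..b}. dist (g s) (g t) = \<bar>s - t\<bar>"
    and ab: "a \<le> b" and rho: "C \<le> \<rho>" and C0: "0 \<le> C" and fin: "infdist (g b) P \<le> \<rho>"
  shows "\<exists>v\<in>{a..b}. infdist (g v) P \<le> \<rho> + 2 \<and> (\<forall>c\<in>proj P (g a). dist (g v) c \<le> \<rho> + 2 + C)"
proof -
  let ?h = "\<lambda>t. g (- t)"
  have iso': "\<forall>s\<in>{-b..-a}. \<forall>t\<in>{-b..-a}. dist (?h s) (?h t) = \<bar>s - t\<bar>"
  proof (intro ballI)
    fix s t assume "s \<in> {-b..-a}" "t \<in> {-b..-a}"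
    then have "-s \<in> {a..b}" "-t \<in> {a..b}" by auto
    then show "dist (?h s) (?h t) = \<bar>s - t\<bar>" using iso by fastforce
  qed
  obtain w where w: "w \<in> {-b..-a}" "infdist (?h w) P \<le> \<rho> + 2"
    "\<forall>c\<in>proj P (?h (-a)). dist (?h w) c \<le> \<rho> + 2 + C"
    using last_exit[OF ctr cP iso' _ rho C0] ab fin by auto
  then show ?thesis by (intro bexI[of _ "-w"]) auto
qed

lemma qc:
  fixes g :: "real \<Rightarrow> 'a::metric_space"
  assumes ctr: "contracting C P" and cP: "compact P" "P \<noteq> {}"
    and iso: "\<forall>s\<in>{a..b}. \<forall>t\<in>{a..b}. dist (g s) (g t) = \<bar>s - t\<bar>"
    and u: "a \<le> u" "u \<le> b" and rho: "C \<le> \<rho>" and C0: "0 \<le> C"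
    and ia: "infdist (g a) P \<le> \<rho>" and ib: "infdist (g b) P \<le> \<rho>"
  shows "infdist (g u) P \<le> 3 * \<rho> + 6 + 2 * C"
proof -
  have iso1: "\<forall>s\<in>{a..u}. \<forall>t\<in>{a..u}. dist (g s) (g t) = \<bar>s - t\<bar>" using iso u by auto
  have iso2: "\<forall>s\<in>{u..b}. \<forall>t\<in>{u..b}. dist (g s) (g t) = \<bar>s - t\<bar>" using iso u by auto
  obtain w1 where w1: "w1 \<in> {a..u}" "infdist (g w1) P \<le> \<rho> + 2"
    "\<forall>c\<in>proj P (g u). dist (g w1) c \<le> \<rho> + 2 + C"
    using last_exit[OF ctr cP iso1 u(1) rho C0 ia] by blast
  obtain w2 where w2: "w2 \<in> {u..b}"
    "\<forall>c\<in>proj P (g u). dist (g w2) c \<le> \<rho> + 2 + C"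
    using first_entry[OF ctr cP iso2 u(2) rho C0 ib] by blast
  obtain c where c: "c \<in> proj P (g u)" using proj_ex[OF cP] by blast
  have "dist (g w1) (g w2) \<le> 2 * (\<rho> + 2 + C)"
    using w1(3) w2(2) c dist_triangle[of "g w1" "g w2" c] dist_commute[of "g w2" c] by fastforce
  moreover have "dist (g w1) (g w2) = w2 - w1" "dist (g u) (g w1) = u - w1"
    using iso w1(1) w2(1) u by auto
  moreover have "infdist (g u) P \<le> infdist (g w1) P + dist (g u) (g w1)" by (rule infdist_triangle)
  ultimately show ?thesis using w1 w2 by auto
qed

lemma ray_iso:
  assumes "geod_ray g x0" "0 \<le> a"
  shows "\<forall>s\<in>{a..b}. \<forall>t\<in>{a..b}. dist (g s) (g t) = \<bar>s - t\<bar>"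
  using assms unfolding geod_ray_def by auto

lemma ray_d0:
  assumes "geod_ray g x0" "0 \<le> u"
  shows "dist x0 (g u) = u"
proof -
  have "dist (g 0) (g u) = \<bar>0 - u\<bar>" "g 0 = x0" using assms unfolding geod_ray_def by auto
  then show ?thesis using assms(2) by simp
qed

lemma key:
  fixes \<gamma> \<beta> :: "real \<Rightarrow> 'a::metric_space"
  assumes rC: "C \<le> r" "0 < C" and L: "2*r+3*C+3 \<le> L"
    and gr: "geod_ray \<gamma> x0" and br: "geod_ray \<beta> x0"
    and gs: "geod_seg p lp a b" and ctr: "contracting C (p ` {0..lp})"
    and alpha: "0 \<le> s - L/2"
    and near: "\<forall>u\<in>{s-L/2..s+L/2}. infdist (\<gamma> u) (p ` {0..lp}) \<le> r"
    and far: "\<exists>n::nat. s + L/2 \<le> real n \<and>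
       (\<forall>c1\<in>proj (p ` {0..lp}) (\<gamma> (real n)). \<forall>c2\<in>proj (p ` {0..lp}) (\<beta> (real n)). dist c1 c2 \<le> C)"
  shows "\<forall>u\<in>{s-L/2..s+L/2}. infdist (\<beta> u) (p ` {0..lp}) \<le> 3*r+3*C+12"
proof -
  define P where "P = p ` {0..lp}"
  have cP: "compact P" "P \<noteq> {}" using seg_compact[OF gs] unfolding P_def by auto
  have ctrP: "contracting C P" using ctr unfolding P_def .
  define \<alpha> where "\<alpha> = s - L/2"
  define \<omega> where "\<omega> = s + L/2"
  have L\<alpha>\<omega>: "\<omega> - \<alpha> = L" unfolding \<alpha>_def \<omega>_def by simp
  have \<alpha>0: "0 \<le> \<alpha>" using alpha unfolding \<alpha>_def .
  have \<alpha>\<omega>: "\<alpha> \<le> \<omega>" using L\<alpha>\<omega> L rC by auto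
  have nearP: "\<forall>u\<in>{\<alpha>..\<omega>}. infdist (\<gamma> u) P \<le> r" using near unfolding P_def \<alpha>_def \<omega>_def .
  obtain n :: nat where n: "\<omega> \<le> real n"
    "\<forall>c1\<in>proj P (\<gamma> (real n)). \<forall>c2\<in>proj P (\<beta> (real n)). dist c1 c2 \<le> C"
    using far unfolding P_def \<omega>_def by blast
  obtain c\<gamma> where c\<gamma>: "c\<gamma> \<in> proj P (\<gamma> (real n))" using proj_ex[OF cP] by blast
  obtain c\<beta> where c\<beta>: "c\<beta> \<in> proj P (\<beta> (real n))" using proj_ex[OF cP] by blast
  obtain c0 where c0: "c0 \<in> proj P x0" using proj_ex[OF cP] by blast
  have x0: "\<gamma> 0 = x0" "\<beta> 0 = x0" using gr br unfolding geod_ray_def by auto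
  have dcc: "dist c\<gamma> c\<beta> \<le> C" using n(2) c\<gamma> c\<beta> by blast
  have "dist x0 c0 = infdist x0 P" by (rule proj_dist[OF c0])
  also have "\<dots> \<le> infdist (\<gamma> \<alpha>) P + dist x0 (\<gamma> \<alpha>)" by (rule infdist_triangle)
  also have "dist x0 (\<gamma> \<alpha>) = \<alpha>" using ray_d0[OF gr \<alpha>0] .
  finally have d0': "dist x0 c0 \<le> infdist (\<gamma> \<alpha>) P + \<alpha>" .
  have "infdist (\<gamma> \<alpha>) P \<le> r" using nearP \<alpha>\<omega> by auto
  then have d0: "dist x0 c0 \<le> \<alpha> + r" using d0' by linarith
  have C0: "0 \<le> C" using rC by simp
  have isoG: "\<forall>s\<in>{\<omega>..real n}. \<forall>t\<in>{\<omega>..real n}. dist (\<gamma> s) (\<gamma> t) = \<bar>s - t\<bar>"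
    using ray_iso[OF gr] \<alpha>0 \<alpha>\<omega> by auto
  obtain w where w: "w \<in> {\<omega>..real n}" "\<forall>c\<in>proj P (\<gamma> (real n)). dist (\<gamma> w) c \<le> r + 2 + C"
    using last_exit[OF ctrP cP isoG n(1) rC(1) C0] nearP \<alpha>\<omega> by auto
  have wc: "dist (\<gamma> w) c\<gamma> \<le> r + 2 + C" using w c\<gamma> by blast
  have dw: "dist x0 (\<gamma> w) = w" using ray_d0[OF gr] w \<alpha>0 \<alpha>\<omega> by auto
  show ?thesis
  proof (cases "\<exists>b0\<in>{0..real n}. infdist (\<beta> b0) P \<le> r")
    case True
    then obtain b0 where b0: "b0 \<in> {0..real n}" "infdist (\<beta> b0) P \<le> r" by blast
    have iso1: "\<forall>s\<in>{0..b0}. \<forall>t\<in>{0..b0}. dist (\<beta> s) (\<beta> t) = \<bar>s - t\<bar>"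
      using ray_iso[OF br] by auto
    obtain vf where vf: "vf \<in> {0..b0}" "infdist (\<beta> vf) P \<le> r + 2"
      "\<forall>c\<in>proj P (\<beta> 0). dist (\<beta> vf) c \<le> r + 2 + C"
      using first_entry[OF ctrP cP iso1 _ rC(1) C0 b0(2)] b0(1) by auto
    have "vf = dist x0 (\<beta> vf)" using ray_d0[OF br] vf by auto
    also have "\<dots> \<le> dist x0 c0 + dist (\<beta> vf) c0" using dist_triangle[of x0 "\<beta> vf" c0] by (simp add: dist_commute)
    finally have vfb: "vf \<le> \<alpha> + 2*r + 2 + C" using d0 vf(3) c0 x0 by fastforce
    have iso2: "\<forall>s\<in>{b0..real n}. \<forall>t\<in>{b0..real n}. dist (\<beta> s) (\<beta> t) = \<bar>s - t\<bar>"
      using ray_iso[OF br] b0 by auto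
    obtain vl where vl: "vl \<in> {b0..real n}" "infdist (\<beta> vl) P \<le> r + 2"
      "\<forall>c\<in>proj P (\<beta> (real n)). dist (\<beta> vl) c \<le> r + 2 + C"
      using last_exit[OF ctrP cP iso2 _ rC(1) C0 b0(2)] b0(1) by auto
    have vlc: "dist (\<beta> vl) c\<beta> \<le> r + 2 + C" using vl c\<beta> by blast
    have "w \<le> dist x0 (\<beta> vl) + dist (\<beta> vl) (\<gamma> w)" using dist_triangle[of x0 "\<gamma> w" "\<beta> vl"] dw by simp
    also have "dist x0 (\<beta> vl) = vl" using ray_d0[OF br] vl b0 by auto
    also have "dist (\<beta> vl) (\<gamma> w) \<le> dist (\<beta> vl) c\<beta> + dist c\<beta> c\<gamma> + dist c\<gamma> (\<gamma> w)"
      using dist_triangle[of "\<beta> vl" "\<gamma> w" c\<beta>] dist_triangle[of c\<beta> "\<gamma> w" c\<gamma>] by linarith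
    finally have "w \<le> vl + (dist (\<beta> vl) c\<beta> + dist c\<beta> c\<gamma> + dist c\<gamma> (\<gamma> w))" by simp
    moreover have "dist c\<beta> c\<gamma> \<le> C" "dist c\<gamma> (\<gamma> w) \<le> r + 2 + C"
      using dcc wc by (simp_all add: dist_commute)
    ultimately have vlb: "\<omega> - (2*r + 4 + 3*C) \<le> vl" using vlc w(1) by auto
    show ?thesis
    proof
      fix u assume u: "u \<in> {s-L/2..s+L/2}"
      then have u': "\<alpha> \<le> u" "u \<le> \<omega>" unfolding \<alpha>_def \<omega>_def by auto
      have tri: "infdist (\<beta> u) P \<le> infdist (\<beta> v) P + \<bar>u - v\<bar>" if "0 \<le> v" for v
      proof -
        have "dist (\<beta> u) (\<beta> v) = \<bar>u - v\<bar>" using br u' \<alpha>0 that unfolding geod_ray_def by auto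
        then show ?thesis using infdist_triangle[of "\<beta> u" P "\<beta> v"] by simp
      qed
      have "infdist (\<beta> u) P \<le> 3*r+3*C+12"
      proof (cases "u < vf")
        case True
        then show ?thesis using tri[of vf] vf vfb u' rC by auto
      next
        case nf: False
        show ?thesis
        proof (cases "vl < u")
          case True
          then show ?thesis using tri[of vl] vl vlb u' rC b0 by auto
        next
          case False
          have iso3: "\<forall>s\<in>{vf..vl}. \<forall>t\<in>{vf..vl}. dist (\<beta> s) (\<beta> t) = \<bar>s - t\<bar>"
            using ray_iso[OF br] vf by auto
          have "infdist (\<beta> u) P \<le> 3 * (r+2) + 6 + 2 * C"
            using qc[OF ctrP cP iso3, of u "r+2"] nf False vf vl rC by auto
          then show ?thesis using C0 by (simp add: distrib_left)
        qed
      qed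
      then show "infdist (\<beta> u) (p ` {0..lp}) \<le> 3*r+3*C+12" unfolding P_def .
    qed
  next
    case False
    have isoB: "\<forall>s\<in>{0..real n}. \<forall>t\<in>{0..real n}. dist (\<beta> s) (\<beta> t) = \<bar>s - t\<bar>"
      using ray_iso[OF br] by auto
    have farB: "\<forall>t\<in>{0..real n}. C \<le> infdist (\<beta> t) P"
    proof
      fix t assume "t \<in> {0..real n}"
      then have "\<not> infdist (\<beta> t) P \<le> r" using False by blast
      then show "C \<le> infdist (\<beta> t) P" using rC by linarith
    qed
    have c0': "c0 \<in> proj P (\<beta> 0)" using c0 x0 by simp
    have dcb: "dist c0 c\<beta> \<le> C" using no_entry[OF ctrP isoB _ farB c0' c\<beta>] by simp
    have "w \<le> dist x0 c0 + dist c0 c\<beta> + dist c\<beta> c\<gamma> + dist c\<gamma> (\<gamma> w)"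
      using dw dist_triangle[of x0 "\<gamma> w" c0] dist_triangle[of c0 "\<gamma> w" c\<beta>]
        dist_triangle[of c\<beta> "\<gamma> w" c\<gamma>] by linarith
    moreover have "dist c\<beta> c\<gamma> \<le> C" "dist c\<gamma> (\<gamma> w) \<le> r + 2 + C"
      using dcc wc by (simp_all add: dist_commute)
    ultimately have "w \<le> \<alpha> + 2*r + 2 + 3*C" using d0 dcb by linarith
    then have False using w(1) L\<alpha>\<omega> L by auto
    then show ?thesis ..
  qed
qed

lemma far_lemma:
  fixes \<gamma> \<beta> :: "real \<Rightarrow> 'a::metric_space"
  assumes geodesic: "\<forall>x y::'a. \<exists>g l. geod_seg g l x y"
    and np: "nonpinched e rel \<xi>"
    and ag: "accum_into e (\<lambda>n. \<gamma> (real n)) (cls e rel \<xi>)"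
    and ab: "accum_into e (\<lambda>n. \<beta> (real n)) (cls e rel \<xi>)"
    and gs: "geod_seg p lp a b" and ctr: "contracting C (p ` {0..lp})"
  shows "\<exists>n::nat. M \<le> real n \<and>
       (\<forall>c1\<in>proj (p ` {0..lp}) (\<gamma> (real n)). \<forall>c2\<in>proj (p ` {0..lp}) (\<beta> (real n)). dist c1 c2 \<le> C)"
proof -
  define P where "P = p ` {0..lp}"
  have cP: "compact P" "P \<noteq> {}" using seg_compact[OF gs] unfolding P_def by auto
  have ctrP: "contracting C P" using ctr unfolding P_def .
  have isop: "\<forall>s\<in>{0..lp}. \<forall>t\<in>{0..lp}. dist (p s) (p t) = \<bar>s - t\<bar>" and lp0: "0 \<le> lp"
    using gs unfolding geod_seg_def by auto
  have "\<forall>n. \<exists>gl. geod_seg (fst gl) (snd gl) (\<gamma> (real n)) (\<beta> (real n))"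
  proof
    fix n
    obtain g l where "geod_seg g l (\<gamma> (real n)) (\<beta> (real n))" using geodesic by blast
    then show "\<exists>gl. geod_seg (fst gl) (snd gl) (\<gamma> (real n)) (\<beta> (real n))"
      by (intro exI[of _ "(g, l)"]) simp
  qed
  from choice[OF this] obtain GL where GL: "\<forall>n. geod_seg (fst (GL n)) (snd (GL n)) (\<gamma> (real n)) (\<beta> (real n))"
    by blast
  define G where "G n = fst (GL n)" for n
  define Ln where "Ln n = snd (GL n)" for n
  have G: "\<forall>n. geod_seg (G n) (Ln n) (\<gamma> (real n)) (\<beta> (real n))"
    using GL unfolding G_def Ln_def by blast
  have esc: "escaping (\<lambda>n. G n ` {0..Ln n})"
    using np[unfolded nonpinched_def, rule_format, OF conjI[OF ag ab] G[rule_format]] .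
  then have "filterlim (\<lambda>n. infdist (p 0) (G n ` {0..Ln n})) at_top sequentially"
    unfolding escaping_def by blast
  then have ev1: "eventually (\<lambda>n. lp + C \<le> infdist (p 0) (G n ` {0..Ln n})) sequentially"
    by (simp add: filterlim_at_top)
  have ev2: "eventually (\<lambda>n. M \<le> real n) sequentially"
    using filterlim_real_sequentially by (simp add: filterlim_at_top)
  obtain N where N: "\<forall>n\<ge>N. lp + C \<le> infdist (p 0) (G n ` {0..Ln n}) \<and> M \<le> real n"
    using eventually_conj[OF ev1 ev2] unfolding eventually_sequentially by (elim exE) blast
  define n where "n = N"
  have nN: "lp + C \<le> infdist (p 0) (G n ` {0..Ln n})" "M \<le> real n" using N unfolding n_def by auto
  have Gn: "geod_seg (G n) (Ln n) (\<gamma> (real n)) (\<beta> (real n))" using G by blast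
  have far: "\<forall>z\<in>G n ` {0..Ln n}. C \<le> infdist z P"
  proof
    fix z assume z: "z \<in> G n ` {0..Ln n}"
    obtain c where c: "c \<in> proj P z" using proj_ex[OF cP] by blast
    then have cz: "dist z c = infdist z P" "c \<in> P" unfolding proj_def by auto
    then obtain \<tau> where \<tau>: "\<tau> \<in> {0..lp}" "c = p \<tau>" unfolding P_def by auto
    have "dist (p 0) (p \<tau>) = \<bar>0 - \<tau>\<bar>" using isop \<tau>(1) lp0 by simp
    then have "dist (p 0) c \<le> lp" using \<tau> by simp
    moreover have "infdist (p 0) (G n ` {0..Ln n}) \<le> dist (p 0) z" using z by (rule infdist_le)
    moreover have "dist (p 0) z \<le> dist (p 0) c + dist c z" by (rule dist_triangle)
    ultimately show "C \<le> infdist z P" using nN(1) cz(1) dist_commute[of c z] by linarith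
  qed
  have ne: "G n ` {0..Ln n} \<noteq> {}" using Gn unfolding geod_seg_def by auto
  have sd: "C \<le> sdist (G n ` {0..Ln n}) P"
    unfolding sdist_def using far ne by (auto intro!: cINF_greatest)
  have ed: "ediam (projset P (G n ` {0..Ln n})) \<le> ereal C"
    using conjunct2[OF ctrP[unfolded contracting_def], rule_format, OF Gn sd] .
  have ends: "\<gamma> (real n) \<in> G n ` {0..Ln n}" "\<beta> (real n) \<in> G n ` {0..Ln n}"
  proof -
    have "0 \<in> {0..Ln n}" "Ln n \<in> {0..Ln n}" "G n 0 = \<gamma> (real n)" "G n (Ln n) = \<beta> (real n)"
      using Gn unfolding geod_seg_def by auto
    then show "\<gamma> (real n) \<in> G n ` {0..Ln n}" "\<beta> (real n) \<in> G n ` {0..Ln n}"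
      by (metis rev_image_eqI)+
  qed
  have "\<forall>c1\<in>proj P (\<gamma> (real n)). \<forall>c2\<in>proj P (\<beta> (real n)). dist c1 c2 \<le> C"
  proof (intro ballI)
    fix c1 c2 assume c1: "c1 \<in> proj P (\<gamma> (real n))" and c2: "c2 \<in> proj P (\<beta> (real n))"
    have "c1 \<in> projset P (G n ` {0..Ln n})" "c2 \<in> projset P (G n ` {0..Ln n})"
      using c1 c2 ends unfolding projset_def by auto
    then have "ereal (dist c1 c2) \<le> ereal C"
      using ed unfolding ediam_def by (meson SUP_upper order_trans)
    then show "dist c1 c2 \<le> C" by simp
  qed
  then show ?thesis using nN(2) unfolding P_def by blast
qed

lemma inner:
  fixes \<gamma> \<beta> :: "real \<Rightarrow> 'a::metric_space" and e :: "'a \<Rightarrow> 'm::metric_space"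
  assumes geodesic: "\<forall>x y::'a. \<exists>g l. geod_seg g l x y"
    and cc: "conv_compact e rel"
    and rC: "r \<ge> C \<and> C > 0"
    and H: "2*r+3*C+3 \<le> L \<and> 0 < \<theta> \<and> \<theta> \<le> 1 \<and>
              geod_ray \<gamma> x0 \<and> freq_ray r C L \<theta> \<gamma> \<and>
              \<xi> \<in> bdry e \<and> ends_at e rel \<gamma> \<xi> \<and>
              (\<forall>\<eta>\<in>cls e rel \<xi>. nonpinched e rel \<eta>)"
  shows "\<forall>\<beta>. geod_ray \<beta> x0 \<and> ends_at e rel \<beta> \<xi> \<longrightarrow> freq_ray (3*r+3*C+12) C L \<theta> \<beta>"
proof -
  have refl: "\<forall>\<xi>\<in>bdry e. rel \<xi> \<xi>"
    using conjunct1[OF conjunct2[OF conjunct2[OF conjunct2[OF conjunct2[OF cc[unfolded conv_compact_def]]]]]] .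
    have \<xi>cls: "\<xi> \<in> cls e rel \<xi>" using H refl unfolding cls_def by auto
    have np: "nonpinched e rel \<xi>" using H \<xi>cls by blast
    have seqok: "(\<forall>n. 0 \<le> real n) \<and> filterlim real at_top sequentially"
      using filterlim_real_sequentially by simp
    have ag: "accum_into e (\<lambda>n. \<gamma> (real n)) (cls e rel \<xi>)"
      using H seqok unfolding ends_at_def by blast
    from H obtain R0 where R0: "\<forall>t\<ge>R0. freq_seg r C L \<theta> \<gamma> t" unfolding freq_ray_def by blast
  show ?thesis
  proof (intro allI impI)
      fix \<beta> assume B: "geod_ray \<beta> x0 \<and> ends_at e rel \<beta> \<xi>"
      have ab: "accum_into e (\<lambda>n. \<beta> (real n)) (cls e rel \<xi>)"
        using B seqok unfolding ends_at_def by blast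
      show "freq_ray (3*r+3*C+12) C L \<theta> \<beta>"
        unfolding freq_ray_def
      proof (intro exI[of _ R0] allI impI)
        fix l assume l: "R0 \<le> l"
        show "freq_seg (3*r+3*C+12) C L \<theta> \<beta> l"
          unfolding freq_seg_def
        proof (intro allI impI)
          fix t assume t: "0 < t \<and> t < (1 - \<theta>) * l"
          obtain s p lp a b where sub: "{s - L/2 .. s + L/2} \<subseteq> {t .. t + \<theta> * l}"
            and gs: "geod_seg p lp a b" and ctr: "contracting C (p ` {0..lp})"
            and near: "\<forall>u\<in>{s - L/2 .. s + L/2}. infdist (\<gamma> u) (p ` {0..lp}) \<le> r"
            using R0 l t unfolding freq_seg_def by blast
          have Lpos: "0 \<le> L" using H rC by linarith
          have alpha: "0 \<le> s - L/2" using sub t Lpos by auto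
          have far: "\<exists>n::nat. s + L/2 \<le> real n \<and>
             (\<forall>c1\<in>proj (p ` {0..lp}) (\<gamma> (real n)). \<forall>c2\<in>proj (p ` {0..lp}) (\<beta> (real n)). dist c1 c2 \<le> C)"
            by (rule far_lemma[OF geodesic np ag ab gs ctr])
          have "\<forall>u\<in>{s-L/2..s+L/2}. infdist (\<beta> u) (p ` {0..lp}) \<le> 3*r+3*C+12"
            using key[OF _ _ _ _ _ gs ctr alpha near far] rC H B by blast
          then show "\<exists>s. {s - L/2 .. s + L/2} \<subseteq> {t .. t + \<theta> * l} \<and>
              (\<exists>p lp a b. geod_seg p lp a b \<and> contracting C (p ` {0..lp}) \<and>
                 (\<forall>u\<in>{s - L/2 .. s + L/2}. infdist (\<beta> u) (p ` {0..lp}) \<le> 3*r+3*C+12))"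
            using sub gs ctr by blast
        qed
      qed
    qed
qed

theorem lemma2p24:
  fixes e :: "'a::metric_space \<Rightarrow> 'm::metric_space"
    and rel :: "'m \<Rightarrow> 'm \<Rightarrow> bool"
  assumes proper: "\<forall>(x::'a) (R::real). compact (cball x R)"
    and geodesic: "\<forall>x y::'a. \<exists>g l. geod_seg g l x y"
    and cc: "conv_compact e rel"
  shows "\<forall>r C. r \<ge> C \<and> C > 0 \<longrightarrow>
           (\<exists>rh L0. \<forall>L \<theta> \<gamma> x0 \<xi>.
              L \<ge> L0 \<and> 0 < \<theta> \<and> \<theta> \<le> 1 \<and>
              geod_ray \<gamma> x0 \<and> freq_ray r C L \<theta> \<gamma> \<and>
              \<xi> \<in> bdry e \<and> ends_at e rel \<gamma> \<xi> \<and>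
              (\<forall>\<eta>\<in>cls e rel \<xi>. nonpinched e rel \<eta>) \<longrightarrow>
              (\<forall>\<beta>. geod_ray \<beta> x0 \<and> ends_at e rel \<beta> \<xi> \<longrightarrow> freq_ray rh C L \<theta> \<beta>))"
  apply (intro allI impI)
  apply (rule_tac x="3*r+3*C+12" in exI)
  apply (rule_tac x="2*r+3*C+3" in exI)
  apply (intro allI impI)
  apply (rule inner[OF geodesic cc, rule_format])
     apply assumption+
  done

end
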